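(* Let $\Phi=(A;A^*;\{E_i\}_{i=0}^d;\{E^*_i\}_{i=0}^d)$ be a Leonard system in $\mathcal A$, with scalars $x_i$ and polynomials $p_i$ as defined below. Then $x_1,\dots,x_d$ are nonzero and $$E^*_i=\frac{p_i(A)E^*_0p_i(A)}{x_1x_2\cdots x_i}\qquad(0\le i\le d).$$
   Context: Let $\mathbb K$ be a field, $d\ge 0$ an integer, and $\mathcal A$ a $\mathbb K$-algebra isomorphic to $\mathrm{Mat}_{d+1}(\mathbb K)$, with identity $I$ and trace $\mathrm{tr}$. An element $A\in\mathcal A$ is multiplicity-free if it has $d+1$ mutually distinct eigenvalues in $\mathbb K$; if $\theta_0,\dots,\theta_d$ is an ordering of them, the primitive idempotent of $A$ associated with $\theta_i$ is $E_i=\prod_{j\ne i}(A-\theta_jI)/(\theta_i-\theta_j)$. A Leonard system in $\mathcal A$ is a sequence $\Phi=(A;A^*;\{E_i\}_{i=0}^d;\{E^*_i\}_{i=0}^d)$ such that: (i) $A,A^*$ are multiplicity-free; (ii) $E_0,\dots,E_d$ is an ordering of the primitive idempotents of $A$; (iii) $E^*_0,\dots,E^*_d$ is an ordering of those of $A^*$; (iv) $E_iA^*E_j=0$ if $|i-j|>1$ and $\ne0$ if $|i-j|=1$ $(0\le i,j\le d)$; (v) $E^*_iAE^*_j=0$ if $|i-j|>1$ and $\neq0$ if $|i-j|=1$ $(0\le i,j\le d)$. Define $a_i=\mathrm{tr}(E^*_iA)$ $(0\le i\le d)$, $x_i=\mathrm{tr}(E^*_iAE^*_{i-1}A)$ $(1\le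 i\le d)$, $x_0=0$, and polynomials $p_0,\dots,p_{d+1}\in\mathbb K[\lambda]$ by $p_0=1$, $p_{-1}=0$, $\lambda p_i=p_{i+1}+a_ip_i+x_ip_{i-1}$ $(0\le i\le d)$. The empty product $x_1\cdots x_0$ equals $1$. *)

theory Defs
  imports "Jordan_Normal_Form.Char_Poly"
begin

text \<open>The algebra is realised concretely as the algebra of (d+1)x(d+1) matrices over
  the field 'a (type class field), i.e. carrier_mat (Suc d) (Suc d).\<close>

definition mat_trace :: "'a :: comm_ring_1 mat \<Rightarrow> 'a" where
  "mat_trace M = (\<Sum>i<dim_row M. M $$ (i, i))"

definition poly_mat :: "nat \<Rightarrow> 'a :: comm_ring_1 poly \<Rightarrow> 'a mat \<Rightarrow> 'a mat" where
  "poly_mat n p M = fold_coeffs (\<lambda>c B. c \<cdot>\<^sub>m 1\<^sub>m n + M * B) p (0\<^sub>m n n)"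

definition mult_free :: "nat \<Rightarrow> 'a :: field mat \<Rightarrow> bool" where
  "mult_free d M \<longleftrightarrow> M \<in> carrier_mat (Suc d) (Suc d) \<and> card {k. eigenvalue M k} = Suc d"

definition prim_idem :: "nat \<Rightarrow> 'a :: field mat \<Rightarrow> (nat \<Rightarrow> 'a) \<Rightarrow> nat \<Rightarrow> 'a mat" where
  "prim_idem d M \<theta> i =
     (1 / (\<Prod>j\<in>{0..d} - {i}. (\<theta> i - \<theta> j))) \<cdot>\<^sub>m
       foldr (\<lambda>j B. (M - \<theta> j \<cdot>\<^sub>m 1\<^sub>m (Suc d)) * B) (filter (\<lambda>j. j \<noteq> i) [0..<Suc d]) (1\<^sub>m (Suc d))"

definition idem_ordering :: "nat \<Rightarrow> 'a :: field mat \<Rightarrow> (nat \<Rightarrow> 'a mat) \<Rightarrow> bool" where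
  "idem_ordering d M E \<longleftrightarrow>
     (\<exists>\<theta>. inj_on \<theta> {0..d} \<and> (\<forall>i\<le>d. eigenvalue M (\<theta> i)) \<and>
          (\<forall>i\<le>d. E i = prim_idem d M \<theta> i))"

definition leonard_system ::
  "nat \<Rightarrow> 'a :: field mat \<Rightarrow> 'a mat \<Rightarrow> (nat \<Rightarrow> 'a mat) \<Rightarrow> (nat \<Rightarrow> 'a mat) \<Rightarrow> bool" where
  "leonard_system d A As E Es \<longleftrightarrow>
     mult_free d A \<and> mult_free d As \<and>
     idem_ordering d A E \<and> idem_ordering d As Es \<and>
     (\<forall>i\<le>d. \<forall>j\<le>d.
        (i + 1 < j \<or> j + 1 < i \<longrightarrow> E i * As * E j = 0\<^sub>m (Suc d) (Suc d)) \<and>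
        (i = j + 1 \<or> j = i + 1 \<longrightarrow> E i * As * E j \<noteq> 0\<^sub>m (Suc d) (Suc d))) \<and>
     (\<forall>i\<le>d. \<forall>j\<le>d.
        (i + 1 < j \<or> j + 1 < i \<longrightarrow> Es i * A * Es j = 0\<^sub>m (Suc d) (Suc d)) \<and>
        (i = j + 1 \<or> j = i + 1 \<longrightarrow> Es i * A * Es j \<noteq> 0\<^sub>m (Suc d) (Suc d)))"

definition ls_a :: "'a :: field mat \<Rightarrow> (nat \<Rightarrow> 'a mat) \<Rightarrow> nat \<Rightarrow> 'a" where
  "ls_a A Es i = mat_trace (Es i * A)"

definition ls_x :: "'a :: field mat \<Rightarrow> (nat \<Rightarrow> 'a mat) \<Rightarrow> nat \<Rightarrow> 'a" where
  "ls_x A Es i = (if i = 0 then 0 else mat_trace (Es i * A * Es (i - 1) * A))"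

text \<open>p_0 = 1, p_(-1) = 0, lambda p_i = p_(i+1) + a_i p_i + x_i p_(i-1).\<close>
fun ls_p :: "(nat \<Rightarrow> 'a :: field) \<Rightarrow> (nat \<Rightarrow> 'a) \<Rightarrow> nat \<Rightarrow> 'a poly" where
  "ls_p a x 0 = 1"
| "ls_p a x (Suc 0) = [:- a 0, 1:]"
| "ls_p a x (Suc (Suc i)) = [:- a (Suc i), 1:] * ls_p a x (Suc i) - [: x (Suc i) :] * ls_p a x i"

end

theory Submission
  imports Defs
begin

lemma poly_mat_pCons:
  assumes M: "M \<in> carrier_mat n n"
  shows "poly_mat n (pCons a p) M = a \<cdot>\<^sub>m 1\<^sub>m n + M * poly_mat n p M"
proof (cases "a = 0 \<and> p = 0")
  case True
  then show ?thesis using M by (auto simp: poly_mat_def)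
next
  case False
  then have "fold_coeffs f (pCons a p) = f a \<circ> fold_coeffs f p" for f :: "'a \<Rightarrow> 'a mat \<Rightarrow> 'a mat"
    by auto
  then show ?thesis by (simp add: poly_mat_def)
qed

lemma poly_mat_0[simp]: "poly_mat n 0 M = 0\<^sub>m n n"
  by (simp add: poly_mat_def)

lemma poly_mat_carrier[simp]:
  assumes M: "M \<in> carrier_mat n n"
  shows "poly_mat n p M \<in> carrier_mat n n"
  by (induct p rule: pCons_induct) (use M in \<open>auto simp: poly_mat_pCons\<close>)

lemma poly_mat_dim[simp]:
  assumes M: "M \<in> carrier_mat n n"
  shows "dim_row (poly_mat n p M) = n" "dim_col (poly_mat n p M) = n"
  using poly_mat_carrier[OF M, of p] by auto

lemma poly_mat_add:
  assumes M: "M \<in> carrier_mat n n"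
  shows "poly_mat n (p + q) M = poly_mat n p M + poly_mat n q M"
proof (induct p q rule: poly_induct2)
  case 0 then show ?case by simp
next
  case (pCons a p b q)
  have c: "poly_mat n p M \<in> carrier_mat n n" "poly_mat n q M \<in> carrier_mat n n" using M by auto
  show ?case
    unfolding add_pCons poly_mat_pCons[OF M] pCons mult_add_distrib_mat[OF M c]
    by (rule eq_matI) (use M c in \<open>auto simp: algebra_simps\<close>)
qed

lemma poly_mat_smult:
  assumes M: "M \<in> carrier_mat n n"
  shows "poly_mat n (Polynomial.smult c p) M = c \<cdot>\<^sub>m poly_mat n p M"
proof (induct p rule: pCons_induct)
  case 0 then show ?case by (rule eq_matI) auto
next
  case (pCons a p)
  have c: "poly_mat n p M \<in> carrier_mat n n" using M by auto
  show ?case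
    unfolding smult_pCons poly_mat_pCons[OF M] pCons mult_smult_distrib[OF M c]
    by (rule eq_matI) (use M c in \<open>auto simp: algebra_simps\<close>)
qed

lemma poly_mat_pCons0:
  assumes M: "M \<in> carrier_mat n n"
  shows "poly_mat n (pCons 0 p) M = M * poly_mat n p M"
  unfolding poly_mat_pCons[OF M] by (rule eq_matI) (use M in auto)

lemma poly_mat_comm:
  assumes M: "M \<in> carrier_mat n n"
  shows "M * poly_mat n p M = poly_mat n p M * M"
proof (induct p rule: pCons_induct)
  case 0 then show ?case using M by simp
next
  case (pCons a p)
  have c: "poly_mat n p M \<in> carrier_mat n n" using M by auto
  have e1: "M * (a \<cdot>\<^sub>m 1\<^sub>m n) = a \<cdot>\<^sub>m M" using M by (simp add: mult_smult_distrib[OF M one_carrier_mat])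
  have e2: "(a \<cdot>\<^sub>m 1\<^sub>m n) * M = a \<cdot>\<^sub>m M" using M by (simp add: mult_smult_assoc_mat[OF one_carrier_mat M])
  have e3: "M * (M * poly_mat n p M) = (M * poly_mat n p M) * M"
    using M c pCons(2) by (simp add: assoc_mult_mat[of _ n n _ n _ n, symmetric])
  have "M * (a \<cdot>\<^sub>m 1\<^sub>m n + M * poly_mat n p M) = M * (a \<cdot>\<^sub>m 1\<^sub>m n) + M * (M * poly_mat n p M)"
    by (rule mult_add_distrib_mat[OF M]) (use M c in auto)
  also have "\<dots> = (a \<cdot>\<^sub>m 1\<^sub>m n) * M + (M * poly_mat n p M) * M"
    unfolding e1 e2 e3 ..
  also have "\<dots> = (a \<cdot>\<^sub>m 1\<^sub>m n + M * poly_mat n p M) * M"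
    by (rule add_mult_distrib_mat[symmetric]) (use M c in auto)
  finally show ?case unfolding poly_mat_pCons[OF M] .
qed

lemma poly_mat_transpose:
  assumes M: "M \<in> carrier_mat n n"
  shows "poly_mat n p (transpose_mat M) = transpose_mat (poly_mat n p M)"
proof (induct p rule: pCons_induct)
  case 0 then show ?case by (rule eq_matI) auto
next
  case (pCons a p)
  have c: "poly_mat n p M \<in> carrier_mat n n" using M by auto
  have Mt: "transpose_mat M \<in> carrier_mat n n" using M by auto
  show ?case unfolding poly_mat_pCons[OF M] poly_mat_pCons[OF Mt] pCons(2)
    unfolding transpose_mult[OF c M, symmetric] poly_mat_comm[OF M]
    by (rule eq_matI) (use M c in auto)
qed

context
  fixes n :: nat and W V :: "'a :: field mat"
  assumes W: "W \<in> carrier_mat n n" and V: "V \<in> carrier_mat n n"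
    and VW: "V * W = 1\<^sub>m n" and WV: "W * V = 1\<^sub>m n"
begin

lemma conj_mult:
  assumes X: "X \<in> carrier_mat n n" and Y: "Y \<in> carrier_mat n n"
  shows "W * X * V * (W * Y * V) = W * (X * Y) * V"
proof -
  have "W * X * V * (W * Y * V) = W * X * (V * W) * Y * V"
    using W V X Y by (simp add: assoc_mult_mat[of _ n n _ n _ n])
  also have "\<dots> = W * (X * Y) * V" using W V X Y VW by (simp add: assoc_mult_mat[of _ n n _ n _ n])
  finally show ?thesis .
qed

lemma conj_carrier: "X \<in> carrier_mat n n \<Longrightarrow> W * X * V \<in> carrier_mat n n"
  using W V by auto

lemma conj_inv:
  assumes X: "X \<in> carrier_mat n n"
  shows "V * (W * X * V) * W = X"
proof -
  have "V * (W * X * V) * W = (V * W) * X * (V * W)"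
    using W V X by (simp add: assoc_mult_mat[of _ n n _ n _ n])
  then show ?thesis using VW X by simp
qed

lemma conj_inj:
  assumes X: "X \<in> carrier_mat n n" and Y: "Y \<in> carrier_mat n n"
  shows "(W * X * V = W * Y * V) \<longleftrightarrow> X = Y"
  using conj_inv[OF X] conj_inv[OF Y] by metis

lemma conj_smult:
  assumes X: "X \<in> carrier_mat n n"
  shows "c \<cdot>\<^sub>m (W * X * V) = W * (c \<cdot>\<^sub>m X) * V"
  using W V X by (simp add: mult_smult_assoc_mat[of _ n n] mult_smult_distrib[of _ n n])

lemma conj_one: "W * (c \<cdot>\<^sub>m 1\<^sub>m n) * V = c \<cdot>\<^sub>m 1\<^sub>m n"
  using conj_smult[of "1\<^sub>m n" c] W WV by simp

lemma conj_add:
  assumes X: "X \<in> carrier_mat n n" and Y: "Y \<in> carrier_mat n n"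
  shows "W * X * V + W * Y * V = W * (X + Y) * V"
  using W V X Y by (simp add: add_mult_distrib_mat[of _ n n] mult_add_distrib_mat[of _ n n])

lemma poly_mat_conj:
  assumes M: "M \<in> carrier_mat n n"
  shows "poly_mat n p (W * M * V) = W * poly_mat n p M * V"
proof (induct p rule: pCons_induct)
  case 0 then show ?case using W V by simp
next
  case (pCons a p)
  have c: "poly_mat n p M \<in> carrier_mat n n" using M by auto
  have "poly_mat n (pCons a p) (W * M * V) = a \<cdot>\<^sub>m 1\<^sub>m n + W * M * V * (W * poly_mat n p M * V)"
    unfolding poly_mat_pCons[OF conj_carrier[OF M]] pCons(2) ..
  also have "\<dots> = W * (a \<cdot>\<^sub>m 1\<^sub>m n) * V + W * (M * poly_mat n p M) * V"
    unfolding conj_one conj_mult[OF M c] ..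
  also have "\<dots> = W * poly_mat n (pCons a p) M * V"
    unfolding poly_mat_pCons[OF M] by (rule conj_add) (use M c in auto)
  finally show ?case .
qed

end


lemma smult_one_mat[simp]: "(1::'a::field) \<cdot>\<^sub>m 1\<^sub>m n = 1\<^sub>m n"
  by (rule eq_matI) auto

lemma poly_rec_identity:
  fixes c y :: "'a :: field"
  shows "[:- c, 1:] * p - [:y:] * q = pCons 0 p + (Polynomial.smult (-c) p + Polynomial.smult (-y) q)"
  by (simp add: mult_pCons_left algebra_simps smult_minus_left)

lemma poly_mat_one:
  fixes M :: "'a :: field mat"
  assumes M: "M \<in> carrier_mat n n"
  shows "poly_mat n 1 M = 1\<^sub>m n"
proof -
  have "poly_mat n (pCons 1 0) M = 1\<^sub>m n" unfolding poly_mat_pCons[OF M] using M by simp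
  then show ?thesis by (simp add: one_pCons)
qed

lemma poly_mat_minus:
  assumes M: "M \<in> carrier_mat n n"
  shows "poly_mat n (ls_p a x (Suc (Suc i))) M =
    M * poly_mat n (ls_p a x (Suc i)) M + ((- a (Suc i)) \<cdot>\<^sub>m poly_mat n (ls_p a x (Suc i)) M
      + (- x (Suc i)) \<cdot>\<^sub>m poly_mat n (ls_p a x i) M)"
  unfolding ls_p.simps poly_rec_identity poly_mat_add[OF M] poly_mat_smult[OF M] poly_mat_pCons0[OF M] ..

lemma mult_col0:
  fixes T P :: "'a :: field mat"
  assumes T: "T \<in> carrier_mat n n" and P: "P \<in> carrier_mat n n" and j: "j < n"
    and Pc: "\<And>k. k < n \<Longrightarrow> P $$ (k, 0) = (if k = j then g else 0)" and r: "r < n"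
  shows "(T * P) $$ (r, 0) = T $$ (r, j) * g"
proof -
  have n0: "0 < n" using j by auto
  have "(T * P) $$ (r, 0) = (\<Sum>k\<in>{0..<n}. T $$ (r, k) * P $$ (k, 0))"
    using T P r n0 by (simp add: scalar_prod_def)
  also have "\<dots> = (\<Sum>k\<in>{0..<n}. if k = j then T $$ (r, j) * g else 0)"
    by (rule sum.cong) (auto simp: Pc)
  also have "\<dots> = T $$ (r, j) * g" using j by simp
  finally show ?thesis .
qed

lemma tridiag_col:
  fixes T :: "'a :: field mat"
  assumes T: "T \<in> carrier_mat (Suc d) (Suc d)"
    and tri: "\<And>r c. r \<le> d \<Longrightarrow> c \<le> d \<Longrightarrow> r + 1 < c \<or> c + 1 < r \<Longrightarrow> T $$ (r, c) = 0"
    and ha: "\<And>k. k \<le> d \<Longrightarrow> a k = T $$ (k, k)"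
    and hx: "\<And>k. 1 \<le> k \<Longrightarrow> k \<le> d \<Longrightarrow> x k = T $$ (k, k - 1) * T $$ (k - 1, k)"
  shows "i \<le> d \<Longrightarrow> r \<le> d \<Longrightarrow> poly_mat (Suc d) (ls_p a x i) T $$ (r, 0) =
     (if r = i then (\<Prod>k\<in>{1..i}. T $$ (k, k - 1)) else 0)"
proof (induction i arbitrary: r rule: less_induct)
  case (less i)
  let ?g = "\<lambda>i. (\<Prod>k\<in>{1..i}. T $$ (k, k - 1))"
  show ?case
  proof (cases i)
    case 0
    then show ?thesis using less T by (simp add: poly_mat_one)
  next
    case (Suc j)
    show ?thesis
    proof (cases j)
      case 0
      have "poly_mat (Suc d) [:- a 0, 1:] T = (- a 0) \<cdot>\<^sub>m 1\<^sub>m (Suc d) + T * (1 \<cdot>\<^sub>m 1\<^sub>m (Suc d) + T * 0\<^sub>m (Suc d) (Suc d))"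
        unfolding poly_mat_pCons[OF T] by (simp add: poly_mat_def)
      also have "\<dots> = (- a 0) \<cdot>\<^sub>m 1\<^sub>m (Suc d) + T" using T by simp
      finally have e: "poly_mat (Suc d) [:- a 0, 1:] T = (- a 0) \<cdot>\<^sub>m 1\<^sub>m (Suc d) + T" .
      have "r = 0 \<or> r = 1 \<or> 1 < r" by auto
      have li: "ls_p a x i = [:- a 0, 1:]" using Suc 0 by simp
      show ?thesis unfolding li e using less.prems T Suc 0 ha[of 0] tri[of r 0] \<open>r = 0 \<or> r = 1 \<or> 1 < r\<close> by auto
    next
      case (Suc m)
      have i: "i = Suc (Suc m)" using \<open>i = Suc j\<close> Suc by simp
      have P1: "\<And>k. k < Suc d \<Longrightarrow> poly_mat (Suc d) (ls_p a x (Suc m)) T $$ (k, 0) = (if k = Suc m then ?g (Suc m) else 0)"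
        using less.IH[of "Suc m"] less.prems i by auto
      have P0: "\<And>k. k < Suc d \<Longrightarrow> poly_mat (Suc d) (ls_p a x m) T $$ (k, 0) = (if k = m then ?g m else 0)"
        using less.IH[of m] less.prems i by auto
      have r: "r < Suc d" using less.prems by auto
      have c: "(T * poly_mat (Suc d) (ls_p a x (Suc m)) T) $$ (r, 0) = T $$ (r, Suc m) * ?g (Suc m)"
        by (rule mult_col0[OF T poly_mat_carrier[OF T] _ P1 r]) (use less.prems i in auto)
      have e: "poly_mat (Suc d) (ls_p a x i) T $$ (r, 0) =
         T $$ (r, Suc m) * ?g (Suc m) + ((- a (Suc m)) * poly_mat (Suc d) (ls_p a x (Suc m)) T $$ (r, 0)
          + (- x (Suc m)) * poly_mat (Suc d) (ls_p a x m) T $$ (r, 0))"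
        unfolding i poly_mat_minus[OF T] using T r c by simp
      have gs: "?g (Suc (Suc m)) = ?g (Suc m) * T $$ (Suc (Suc m), Suc m)"
        by (simp add: prod.cl_ivl_Suc)
      have gs1: "?g (Suc m) = ?g m * T $$ (Suc m, m)"
        by (simp add: prod.cl_ivl_Suc)
      have "r = Suc (Suc m) \<or> r = Suc m \<or> r = m \<or> r < m \<or> Suc (Suc (Suc m)) \<le> r" by auto
      then show ?thesis
      proof (elim disjE)
        assume "r = Suc (Suc m)" then show ?thesis unfolding e using P1 P0 r gs i by (simp add: mult.commute)
      next
        assume "r = Suc m" then show ?thesis unfolding e using P1 P0 r i ha[of "Suc m"] less.prems by simp
      next
        assume rm: "r = m" then show ?thesis unfolding e using P1 P0 r i hx[of "Suc m"] less.prems gs1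
          by (simp add: algebra_simps)
      next
        assume "r < m" then show ?thesis unfolding e using P1 P0 r i tri[of r "Suc m"] less.prems by simp
      next
        assume "Suc (Suc (Suc m)) \<le> r" then show ?thesis unfolding e using P1 P0 r i tri[of r "Suc m"] less.prems by simp
      qed
    qed
  qed
qed


definition munit :: "nat \<Rightarrow> nat \<Rightarrow> nat \<Rightarrow> 'a :: field mat" where
  "munit n r c = mat n n (\<lambda>(a, b). if a = r \<and> b = c then 1 else 0)"

lemma munit_carrier[simp]: "munit n r c \<in> carrier_mat n n"
  by (simp add: munit_def)

lemma smult_one_mat_vec:
  fixes v :: "'a :: field vec"
  assumes v: "v \<in> carrier_vec n"
  shows "(t \<cdot>\<^sub>m 1\<^sub>m n) *\<^sub>v v = t \<cdot>\<^sub>v v"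
proof (rule eq_vecI)
  fix i assume i: "i < dim_vec (t \<cdot>\<^sub>v v)"
  then have i': "i < n" using v by simp
  have "((t \<cdot>\<^sub>m 1\<^sub>m n) *\<^sub>v v) $ i = (\<Sum>k\<in>{0..<n}. t * (if k = i then 1 else 0) * v $ k)"
    using i' v by (simp add: scalar_prod_def)
  also have "\<dots> = (\<Sum>k\<in>{0..<n}. if k = i then t * v $ i else 0)"
    by (rule sum.cong) auto
  also have "\<dots> = t * v $ i" using i' by simp
  finally show "((t \<cdot>\<^sub>m 1\<^sub>m n) *\<^sub>v v) $ i = (t \<cdot>\<^sub>v v) $ i" using i' v by simp
qed (use v in simp)

lemma smult_mat_vec_assoc:
  fixes F :: "'a :: field mat"
  assumes F: "F \<in> carrier_mat n n" and v: "v \<in> carrier_vec n"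
  shows "(c \<cdot>\<^sub>m F) *\<^sub>v v = c \<cdot>\<^sub>v (F *\<^sub>v v)"
  by (rule eq_vecI) (use F v in \<open>auto simp: scalar_prod_def sum_distrib_left ac_simps\<close>)

lemma foldr_eig:
  fixes M :: "'a :: field mat"
  assumes M: "M \<in> carrier_mat n n" and v: "v \<in> carrier_vec n" and Mv: "M *\<^sub>v v = l \<cdot>\<^sub>v v"
  shows "foldr (\<lambda>j B. (M - \<theta> j \<cdot>\<^sub>m 1\<^sub>m n) * B) ks (1\<^sub>m n) \<in> carrier_mat n n \<and>
    foldr (\<lambda>j B. (M - \<theta> j \<cdot>\<^sub>m 1\<^sub>m n) * B) ks (1\<^sub>m n) *\<^sub>v v = prod_list (map (\<lambda>j. l - \<theta> j) ks) \<cdot>\<^sub>v v"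
proof (induct ks)
  case Nil then show ?case using v by simp
next
  case (Cons k ks)
  let ?F = "foldr (\<lambda>j B. (M - \<theta> j \<cdot>\<^sub>m 1\<^sub>m n) * B) ks (1\<^sub>m n)"
  let ?c = "prod_list (map (\<lambda>j. l - \<theta> j) ks)"
  have F: "?F \<in> carrier_mat n n" and Fv: "?F *\<^sub>v v = ?c \<cdot>\<^sub>v v" using Cons by auto
  have Mt: "M - \<theta> k \<cdot>\<^sub>m 1\<^sub>m n \<in> carrier_mat n n" using M by auto
  have e1: "(M - \<theta> k \<cdot>\<^sub>m 1\<^sub>m n) *\<^sub>v v = (l - \<theta> k) \<cdot>\<^sub>v v"
    unfolding minus_mult_distrib_mat_vec[OF M _ v, of "\<theta> k \<cdot>\<^sub>m 1\<^sub>m n", simplified] smult_one_mat_vec[OF v] Mv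
    by (rule eq_vecI) (use v in \<open>auto simp: algebra_simps\<close>)
  have "((M - \<theta> k \<cdot>\<^sub>m 1\<^sub>m n) * ?F) *\<^sub>v v = (M - \<theta> k \<cdot>\<^sub>m 1\<^sub>m n) *\<^sub>v (?F *\<^sub>v v)"
    using Mt F v by simp
  also have "\<dots> = ?c \<cdot>\<^sub>v ((l - \<theta> k) \<cdot>\<^sub>v v)" unfolding Fv mult_mat_vec[OF Mt v] e1 ..
  also have "\<dots> = ((l - \<theta> k) * ?c) \<cdot>\<^sub>v v" by (rule eq_vecI) auto
  finally show ?case using Mt F by simp
qed

lemma prim_idem_eig:
  fixes M :: "'a :: field mat"
  assumes M: "M \<in> carrier_mat (Suc d) (Suc d)" and inj: "inj_on \<theta> {0..d}"
    and v: "v \<in> carrier_vec (Suc d)" and Mv: "M *\<^sub>v v = \<theta> j \<cdot>\<^sub>v v" and i: "i \<le> d" and j: "j \<le> d"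
  shows "prim_idem d M \<theta> i \<in> carrier_mat (Suc d) (Suc d)"
    "prim_idem d M \<theta> i *\<^sub>v v = (if i = j then v else 0\<^sub>v (Suc d))"
proof -
  let ?ks = "filter (\<lambda>j. j \<noteq> i) [0..<Suc d]"
  note fe = foldr_eig[OF M v Mv, of \<theta> ?ks]
  have pl: "prod_list (map (\<lambda>k. \<theta> j - \<theta> k) ?ks) = (\<Prod>k\<in>{0..d} - {i}. \<theta> j - \<theta> k)"
  proof -
    have "set ?ks = {0..d} - {i}" by auto
    moreover have "distinct ?ks" by simp
    ultimately show ?thesis by (metis prod.distinct_set_conv_list)
  qed
  let ?F = "foldr (\<lambda>j B. (M - \<theta> j \<cdot>\<^sub>m 1\<^sub>m (Suc d)) * B) ?ks (1\<^sub>m (Suc d))"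
  have F: "?F \<in> carrier_mat (Suc d) (Suc d)" using fe by auto
  then show "prim_idem d M \<theta> i \<in> carrier_mat (Suc d) (Suc d)" unfolding prim_idem_def by simp
  have "prim_idem d M \<theta> i *\<^sub>v v = (1 / (\<Prod>k\<in>{0..d} - {i}. \<theta> i - \<theta> k)) \<cdot>\<^sub>v (?F *\<^sub>v v)"
    unfolding prim_idem_def by (rule smult_mat_vec_assoc[OF F v])
  also have "\<dots> = ((\<Prod>k\<in>{0..d} - {i}. \<theta> j - \<theta> k) / (\<Prod>k\<in>{0..d} - {i}. \<theta> i - \<theta> k)) \<cdot>\<^sub>v v"
    using fe pl by (auto intro!: eq_vecI)
  also have "\<dots> = (if i = j then v else 0\<^sub>v (Suc d))"
  proof (cases "i = j")
    case True
    have "(\<Prod>k\<in>{0..d} - {i}. \<theta> i - \<theta> k) \<noteq> 0"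
      using inj i by (auto simp: inj_on_def)
    then show ?thesis using True by (auto intro!: eq_vecI)
  next
    case False
    have z: "(\<Prod>k\<in>{0..d} - {i}. \<theta> j - \<theta> k) = 0"
      by (rule prod_zero) (use False j in \<open>auto intro!: bexI[of _ j]\<close>)
    show ?thesis unfolding z using False v by (auto intro!: eq_vecI)
  qed
  finally show "prim_idem d M \<theta> i *\<^sub>v v = (if i = j then v else 0\<^sub>v (Suc d))" .
qed


lemma sum_delta_mult:
  fixes f :: "nat \<Rightarrow> 'a :: field"
  assumes "i < n"
  shows "(\<Sum>k\<in>{0..<n}. f k * (if k = i then g else 0)) = f i * g"
proof -
  have "(\<Sum>k\<in>{0..<n}. f k * (if k = i then g else 0)) = (\<Sum>k\<in>{0..<n}. if k = i then f i * g else 0)"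
    by (rule sum.cong) auto
  then show ?thesis using assms by simp
qed

lemma diag_exists:
  fixes As :: "'a :: field mat"
  assumes As: "As \<in> carrier_mat (Suc d) (Suc d)" and io: "idem_ordering d As Es"
  shows "\<exists>W V. W \<in> carrier_mat (Suc d) (Suc d) \<and> V \<in> carrier_mat (Suc d) (Suc d) \<and>
     V * W = 1\<^sub>m (Suc d) \<and> W * V = 1\<^sub>m (Suc d) \<and> (\<forall>i\<le>d. Es i = W * munit (Suc d) i i * V)"
proof -
  let ?n = "Suc d"
  obtain \<theta> where inj: "inj_on \<theta> {0..d}" and eig: "\<And>i. i \<le> d \<Longrightarrow> eigenvalue As (\<theta> i)"
    and Es: "\<And>i. i \<le> d \<Longrightarrow> Es i = prim_idem d As \<theta> i"
    using io unfolding idem_ordering_def by blast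
  have "\<forall>j. \<exists>v. j \<le> d \<longrightarrow> (v \<in> carrier_vec ?n \<and> v \<noteq> 0\<^sub>v ?n \<and> As *\<^sub>v v = \<theta> j \<cdot>\<^sub>v v)"
    using eig As unfolding eigenvalue_def eigenvector_def by auto
  then obtain w where w: "\<And>j. j \<le> d \<Longrightarrow> w j \<in> carrier_vec ?n \<and> w j \<noteq> 0\<^sub>v ?n \<and> As *\<^sub>v w j = \<theta> j \<cdot>\<^sub>v w j"
    by metis
  define W where "W = mat ?n ?n (\<lambda>(r, c). w c $ r)"
  have W: "W \<in> carrier_mat ?n ?n" unfolding W_def by simp
  have colW: "col W c = w c" if "c < ?n" for c
    using that w[of c] unfolding W_def by (auto intro!: eq_vecI)
  define Z where "Z i = mat ?n ?n (\<lambda>(r, c). if c = i then w i $ r else 0)" for i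
  have Ecar: "Es i \<in> carrier_mat ?n ?n" if "i \<le> d" for i
    using prim_idem_eig(1)[OF As inj _ _ that that, of "w i"] w[OF that] Es[OF that] by auto
  have EW: "Es i * W = Z i" if i: "i \<le> d" for i
  proof (rule eq_matI)
    fix r c assume r: "r < dim_row (Z i)" and c: "c < dim_col (Z i)"
    have "(Es i * W) $$ (r, c) = (Es i *\<^sub>v w c) $ r"
      using r c Ecar[OF i] W colW[of c] by (simp add: Z_def)
    also have "\<dots> = (if i = c then w c else 0\<^sub>v ?n) $ r"
      using prim_idem_eig(2)[OF As inj _ _ i, of "w c" c] w[of c] c Es[OF i] by (simp add: Z_def)
    also have "\<dots> = Z i $$ (r, c)" using r c by (auto simp: Z_def)
    finally show "(Es i * W) $$ (r, c) = Z i $$ (r, c)" .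
  qed (use Ecar[OF i] W in \<open>auto simp: Z_def\<close>)
  have WU: "W * munit ?n i i = Z i" if i: "i \<le> d" for i
  proof (rule eq_matI)
    fix r c assume r: "r < dim_row (Z i)" and c: "c < dim_col (Z i)"
    have "(W * munit ?n i i) $$ (r, c) = (\<Sum>k\<in>{0..<?n}. W $$ (r, k) * (if k = i then (if c = i then 1 else 0) else 0))"
      using r c W by (auto simp: Z_def munit_def scalar_prod_def intro!: sum.cong)
    also have "\<dots> = W $$ (r, i) * (if c = i then 1 else 0)"
      by (rule sum_delta_mult) (use i in auto)
    also have "\<dots> = Z i $$ (r, c)" using r c i by (auto simp: Z_def W_def)
    finally show "(W * munit ?n i i) $$ (r, c) = Z i $$ (r, c)" .
  qed (use W in \<open>auto simp: Z_def munit_def\<close>)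
  have Zv: "(Z i *\<^sub>v v) $ r = w i $ r * v $ i" if i: "i \<le> d" and r: "r < ?n" and v: "v \<in> carrier_vec ?n" for i r v
  proof -
    have "(Z i *\<^sub>v v) $ r = (\<Sum>k\<in>{0..<?n}. v $ k * (if k = i then w i $ r else 0))"
      using r v by (auto simp: Z_def scalar_prod_def ac_simps intro!: sum.cong)
    also have "\<dots> = v $ i * w i $ r" by (rule sum_delta_mult) (use i in auto)
    finally show ?thesis by simp
  qed
  have "det W \<noteq> 0"
  proof
    assume "det W = 0"
    then obtain v where v: "v \<in> carrier_vec ?n" "v \<noteq> 0\<^sub>v ?n" "W *\<^sub>v v = 0\<^sub>v ?n"
      using det_0_iff_vec_prod_zero[OF W] by auto
    have "v $ i = 0" if i: "i < ?n" for i
    proof -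
      have i': "i \<le> d" using i by simp
      obtain r where r: "r < ?n" "w i $ r \<noteq> 0"
        using w[OF i'] by (metis carrier_vecD eq_vecI index_zero_vec(1,2))
      have "Z i *\<^sub>v v = Es i *\<^sub>v (W *\<^sub>v v)"
        using EW[OF i'] Ecar[OF i'] W v(1) by (metis assoc_mult_mat_vec)
      also have "\<dots> = 0\<^sub>v ?n" using v(3) Ecar[OF i'] by (auto intro!: eq_vecI simp: scalar_prod_def)
      finally have "(Z i *\<^sub>v v) $ r = 0" using r by simp
      then show ?thesis using Zv[OF i' r(1) v(1)] r(2) by simp
    qed
    then have "v = 0\<^sub>v ?n" using v(1) by (auto intro!: eq_vecI)
    then show False using v(2) by simp
  qed
  from det_non_zero_imp_unit[OF W this, unfolded Units_def, of "()"]
  obtain V where V: "V \<in> carrier_mat ?n ?n" and VW: "V * W = 1\<^sub>m ?n" and WV: "W * V = 1\<^sub>m ?n"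
    by (auto simp: ring_mat_def)
  have "Es i = W * munit ?n i i * V" if i: "i \<le> d" for i
  proof -
    have "Es i = Es i * (W * V)" using WV Ecar[OF i] by simp
    also have "\<dots> = Es i * W * V" using Ecar[OF i] W V by (simp add: assoc_mult_mat[of _ ?n ?n _ ?n _ ?n])
    also have "\<dots> = W * munit ?n i i * V" unfolding EW[OF i] WU[OF i] ..
    finally show ?thesis .
  qed
  then show ?thesis using W V VW WV by blast
qed


lemma munit_left:
  fixes X :: "'a :: field mat"
  assumes X: "X \<in> carrier_mat n n" and i: "i < n" and j: "j < n"
  shows "munit n i j * X = mat n n (\<lambda>(r, c). if r = i then X $$ (j, c) else 0)"
proof (rule eq_matI)
  fix r c assume r: "r < dim_row (mat n n (\<lambda>(r, c). if r = i then X $$ (j, c) else 0) :: 'a mat)"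
    and c: "c < dim_col (mat n n (\<lambda>(r, c). if r = i then X $$ (j, c) else 0) :: 'a mat)"
  have "(munit n i j * X) $$ (r, c) = (\<Sum>k\<in>{0..<n}. X $$ (k, c) * (if k = j then (if r = i then 1 else 0) else 0))"
    using r c X by (auto simp: munit_def scalar_prod_def ac_simps intro!: sum.cong)
  also have "\<dots> = X $$ (j, c) * (if r = i then 1 else 0)" by (rule sum_delta_mult[OF j])
  finally show "(munit n i j * X) $$ (r, c) = mat n n (\<lambda>(r, c). if r = i then X $$ (j, c) else 0) $$ (r, c)"
    using r c by simp
qed (use X in \<open>auto simp: munit_def\<close>)

lemma munit_right:
  fixes X :: "'a :: field mat"
  assumes X: "X \<in> carrier_mat n n" and i: "i < n" and j: "j < n"
  shows "X * munit n i j = mat n n (\<lambda>(r, c). if c = j then X $$ (r, i) else 0)"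
proof (rule eq_matI)
  fix r c assume r: "r < dim_row (mat n n (\<lambda>(r, c). if c = j then X $$ (r, i) else 0) :: 'a mat)"
    and c: "c < dim_col (mat n n (\<lambda>(r, c). if c = j then X $$ (r, i) else 0) :: 'a mat)"
  have "(X * munit n i j) $$ (r, c) = (\<Sum>k\<in>{0..<n}. X $$ (r, k) * (if k = i then (if c = j then 1 else 0) else 0))"
    using r c X by (auto simp: munit_def scalar_prod_def ac_simps intro!: sum.cong)
  also have "\<dots> = X $$ (r, i) * (if c = j then 1 else 0)" by (rule sum_delta_mult[OF i])
  finally show "(X * munit n i j) $$ (r, c) = mat n n (\<lambda>(r, c). if c = j then X $$ (r, i) else 0) $$ (r, c)"
    using r c by simp
qed (use X in \<open>auto simp: munit_def\<close>)

lemma munit_sandwich: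
  fixes X :: "'a :: field mat"
  assumes X: "X \<in> carrier_mat n n" and i: "i < n" and j: "j < n"
  shows "munit n i i * X * munit n j j = X $$ (i, j) \<cdot>\<^sub>m munit n i j"
proof -
  have c: "munit n i i * X \<in> carrier_mat n n" by (rule mult_carrier_mat[OF munit_carrier X])
  let ?L = "mat n n (\<lambda>(r, c). if r = i then X $$ (i, c) else 0) :: 'a mat"
  have L: "munit n i i * X = ?L" by (rule munit_left[OF X i i])
  have Lc: "?L \<in> carrier_mat n n" by simp
  show ?thesis unfolding L munit_right[OF Lc j j]
    by (rule eq_matI) (use i j in \<open>auto simp: munit_def\<close>)
qed

lemma mat_trace_comm:
  fixes X Y :: "'a :: field mat"
  assumes X: "X \<in> carrier_mat n n" and Y: "Y \<in> carrier_mat n n"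
  shows "mat_trace (X * Y) = mat_trace (Y * X)"
proof -
  have "mat_trace (X * Y) = (\<Sum>i<n. \<Sum>k<n. X $$ (i, k) * Y $$ (k, i))"
    using X Y by (simp add: mat_trace_def scalar_prod_def atLeast0LessThan)
  also have "\<dots> = (\<Sum>k<n. \<Sum>i<n. Y $$ (k, i) * X $$ (i, k))"
    by (subst sum.swap) (simp add: ac_simps)
  also have "\<dots> = mat_trace (Y * X)"
    using X Y by (simp add: mat_trace_def scalar_prod_def atLeast0LessThan)
  finally show ?thesis .
qed

lemma mat_trace_conj:
  fixes X W V :: "'a :: field mat"
  assumes W: "W \<in> carrier_mat n n" and V: "V \<in> carrier_mat n n" and VW: "V * W = 1\<^sub>m n"
    and X: "X \<in> carrier_mat n n"
  shows "mat_trace (W * X * V) = mat_trace X"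
proof -
  have "mat_trace (W * X * V) = mat_trace (V * (W * X))"
    using mat_trace_comm[of "W * X" n V] W X V by simp
  also have "V * (W * X) = X" using VW W X V by (simp add: assoc_mult_mat[of _ n n _ n _ n, symmetric])
  finally show ?thesis .
qed

lemma mat_trace_munit_left:
  fixes X :: "'a :: field mat"
  assumes X: "X \<in> carrier_mat n n" and i: "i < n" and j: "j < n"
  shows "mat_trace (munit n i j * X) = X $$ (j, i)"
proof -
  have "mat_trace (munit n i j * X) = (\<Sum>r\<in>{0..<n}. if r = i then X $$ (j, i) else 0)"
    unfolding munit_left[OF X i j] mat_trace_def by (auto simp: atLeast0LessThan intro!: sum.cong)
  then show ?thesis using i by simp
qed

lemma mat_trace_smult: "X \<in> carrier_mat n n \<Longrightarrow> mat_trace (c \<cdot>\<^sub>m X) = c * mat_trace X"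
  by (auto simp: mat_trace_def sum_distrib_left intro!: sum.cong)


lemma munit_mult_carrier[simp]:
  "X \<in> carrier_mat n n \<Longrightarrow> munit n i j * X \<in> carrier_mat n n"
  "X \<in> carrier_mat n n \<Longrightarrow> X * munit n i j \<in> carrier_mat n n"
  by (auto intro!: mult_carrier_mat)

theorem theorem8p6:
  fixes d :: nat and A As :: "'a :: field mat" and E Es :: "nat \<Rightarrow> 'a mat"
  assumes "leonard_system d A As E Es"
  shows "(\<forall>i\<in>{1..d}. ls_x A Es i \<noteq> 0) \<and>
         (\<forall>i\<le>d. Es i =
            (1 / (\<Prod>k\<in>{1..i}. ls_x A Es k)) \<cdot>\<^sub>m
              (poly_mat (Suc d) (ls_p (ls_a A Es) (ls_x A Es) i) A * Es 0 *
               poly_mat (Suc d) (ls_p (ls_a A Es) (ls_x A Es) i) A))"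
proof -
  let ?n = "Suc d"
  have A: "A \<in> carrier_mat ?n ?n" and As: "As \<in> carrier_mat ?n ?n" and io: "idem_ordering d As Es"
    using assms by (auto simp: leonard_system_def mult_free_def)
  have zero: "\<And>i j. i \<le> d \<Longrightarrow> j \<le> d \<Longrightarrow> i + 1 < j \<or> j + 1 < i \<Longrightarrow> Es i * A * Es j = 0\<^sub>m ?n ?n"
    and nz: "\<And>i j. i \<le> d \<Longrightarrow> j \<le> d \<Longrightarrow> i = j + 1 \<or> j = i + 1 \<Longrightarrow> Es i * A * Es j \<noteq> 0\<^sub>m ?n ?n"
    using assms unfolding leonard_system_def by blast+
  obtain W V where W: "W \<in> carrier_mat ?n ?n" and V: "V \<in> carrier_mat ?n ?n"
    and VW: "V * W = 1\<^sub>m ?n" and WV: "W * V = 1\<^sub>m ?n" and EsW: "\<And>i. i \<le> d \<Longrightarrow> Es i = W * munit ?n i i * V"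
    using diag_exists[OF As io] by blast
  note cm = conj_mult[OF W V VW WV] and cinj = conj_inj[OF W V VW WV]
  define B where "B = V * A * W"
  have B: "B \<in> carrier_mat ?n ?n" unfolding B_def using A W V by simp
  have AB: "A = W * B * V"
  proof -
    have "W * B * V = (W * V) * A * (W * V)"
      unfolding B_def using A W V by (simp add: assoc_mult_mat[of _ ?n ?n _ ?n _ ?n])
    then show ?thesis using WV A by simp
  qed
  have EA: "Es i * A = W * (munit ?n i i * B) * V" if i: "i \<le> d" for i
    unfolding EsW[OF i] by (subst AB, rule cm) (use B in auto)
  have EAE: "Es i * A * Es j = W * (B $$ (i, j) \<cdot>\<^sub>m munit ?n i j) * V" if i: "i \<le> d" and j: "j \<le> d" for i j
  proof -
    have "Es i * A * Es j = W * (munit ?n i i * B * munit ?n j j) * V"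
      unfolding EA[OF i] EsW[OF j] by (rule cm) (use B in auto)
    then show ?thesis using munit_sandwich[OF B, of i j] i j by simp
  qed
  have zc: "(Es i * A * Es j = 0\<^sub>m ?n ?n) \<longleftrightarrow> B $$ (i, j) = 0" if i: "i \<le> d" and j: "j \<le> d" for i j
  proof -
    have z: "0\<^sub>m ?n ?n = W * 0\<^sub>m ?n ?n * V" using W V by simp
    have "(Es i * A * Es j = 0\<^sub>m ?n ?n) \<longleftrightarrow> B $$ (i, j) \<cdot>\<^sub>m munit ?n i j = 0\<^sub>m ?n ?n"
      unfolding EAE[OF i j] by (subst z, rule cinj) auto
    also have "\<dots> \<longleftrightarrow> B $$ (i, j) = 0"
    proof
      assume "B $$ (i, j) \<cdot>\<^sub>m munit ?n i j = 0\<^sub>m ?n ?n"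
      then have "(B $$ (i, j) \<cdot>\<^sub>m munit ?n i j) $$ (i, j) = 0" using i j by simp
      then show "B $$ (i, j) = 0" using i j by (simp add: munit_def)
    qed (auto intro!: eq_matI simp: munit_def)
    finally show ?thesis .
  qed
  have tri: "\<And>r c. r \<le> d \<Longrightarrow> c \<le> d \<Longrightarrow> r + 1 < c \<or> c + 1 < r \<Longrightarrow> B $$ (r, c) = 0"
    using zero zc by blast
  have Bnz1: "B $$ (k, k - 1) \<noteq> 0" and Bnz2: "B $$ (k - 1, k) \<noteq> 0" if "1 \<le> k" "k \<le> d" for k
    using nz[of k "k - 1"] nz[of "k - 1" k] zc[of k "k - 1"] zc[of "k - 1" k] that by auto
  have ha: "\<And>k. k \<le> d \<Longrightarrow> ls_a A Es k = B $$ (k, k)"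
    unfolding ls_a_def using EA mat_trace_conj[OF W V VW] mat_trace_munit_left[OF B] B by simp
  have hx: "ls_x A Es k = B $$ (k, k - 1) * B $$ (k - 1, k)" if k: "1 \<le> k" "k \<le> d" for k
  proof -
    let ?c = "B $$ (k, k - 1)"
    have "Es k * A * Es (k - 1) * A = W * ((?c \<cdot>\<^sub>m munit ?n k (k - 1)) * B) * V"
    proof -
      have e1: "Es k * A * Es (k - 1) = W * (?c \<cdot>\<^sub>m munit ?n k (k - 1)) * V" using EAE k by simp
      show ?thesis unfolding e1 by (subst AB, rule cm) (use B in auto)
    qed
    then have "ls_x A Es k = mat_trace ((?c \<cdot>\<^sub>m munit ?n k (k - 1)) * B)"
    proof -
      have cc: "(?c \<cdot>\<^sub>m munit ?n k (k - 1)) * B \<in> carrier_mat ?n ?n"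
        by (rule mult_carrier_mat) (use B in auto)
      show ?thesis unfolding ls_x_def using k mat_trace_conj[OF W V VW cc] \<open>Es k * A * Es (k - 1) * A = _\<close> by simp
    qed
    also have "\<dots> = ?c * mat_trace (munit ?n k (k - 1) * B)"
      unfolding mult_smult_assoc_mat[OF munit_carrier B] by (rule mat_trace_smult[of _ ?n]) (use B in simp)
    also have "\<dots> = ?c * B $$ (k - 1, k)" using mat_trace_munit_left[OF B, of k "k - 1"] k by simp
    finally show ?thesis .
  qed
  have xnz: "\<forall>i\<in>{1..d}. ls_x A Es i \<noteq> 0" using hx Bnz1 Bnz2 by auto
  let ?a = "ls_a A Es" and ?x = "ls_x A Es"
  have main: "Es i = (1 / (\<Prod>k\<in>{1..i}. ?x k)) \<cdot>\<^sub>m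
        (poly_mat ?n (ls_p ?a ?x i) A * Es 0 * poly_mat ?n (ls_p ?a ?x i) A)" if i: "i \<le> d" for i
  proof -
    let ?P = "poly_mat ?n (ls_p ?a ?x i) B"
    let ?g = "\<Prod>k\<in>{1..i}. B $$ (k, k - 1)" and ?b = "\<Prod>k\<in>{1..i}. B $$ (k - 1, k)"
    have P: "?P \<in> carrier_mat ?n ?n" using B by simp
    have col: "?P $$ (r, 0) = (if r = i then ?g else 0)" if "r \<le> d" for r
      by (rule tridiag_col[OF B tri ha hx i that])
    have Bt: "transpose_mat B \<in> carrier_mat ?n ?n" using B by simp
    have row: "?P $$ (0, c) = (if c = i then ?b else 0)" if c: "c \<le> d" for c
    proof -
      have "?P $$ (0, c) = poly_mat ?n (ls_p ?a ?x i) (transpose_mat B) $$ (c, 0)"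
        unfolding poly_mat_transpose[OF B] using c P by simp
      also have "\<dots> = (if c = i then (\<Prod>k\<in>{1..i}. transpose_mat B $$ (k, k - 1)) else 0)"
        by (rule tridiag_col[OF Bt _ _ _ i c]) (use B tri ha hx in \<open>auto simp: mult.commute\<close>)
      also have "(\<Prod>k\<in>{1..i}. transpose_mat B $$ (k, k - 1)) = ?b"
        using i B by (intro prod.cong) auto
      finally show ?thesis .
    qed
    have PUP: "?P * munit ?n 0 0 * ?P = (?g * ?b) \<cdot>\<^sub>m munit ?n i i"
    proof -
      let ?Q = "mat ?n ?n (\<lambda>(r, c). if c = 0 then ?P $$ (r, 0) else 0) :: 'a mat"
      have Q: "?P * munit ?n 0 0 = ?Q" by (rule munit_right[OF P]) auto
      show ?thesis unfolding Q
      proof (rule eq_matI)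
        fix r c assume r: "r < dim_row ((?g * ?b) \<cdot>\<^sub>m munit ?n i i)" and c: "c < dim_col ((?g * ?b) \<cdot>\<^sub>m munit ?n i i)"
        have "(?Q * ?P) $$ (r, c) = (\<Sum>k\<in>{0..<?n}. ?P $$ (k, c) * (if k = 0 then ?P $$ (r, 0) else 0))"
          using r c P by (auto simp: munit_def scalar_prod_def ac_simps intro!: sum.cong)
        also have "\<dots> = ?P $$ (0, c) * ?P $$ (r, 0)" by (rule sum_delta_mult) auto
        also have "\<dots> = ((?g * ?b) \<cdot>\<^sub>m munit ?n i i) $$ (r, c)"
          using r c row[of c] col[of r] i by (auto simp: munit_def)
        finally show "(?Q * ?P) $$ (r, c) = ((?g * ?b) \<cdot>\<^sub>m munit ?n i i) $$ (r, c)" .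
      qed (use P in \<open>auto simp: munit_def\<close>)
    qed
    have gb: "?g * ?b = (\<Prod>k\<in>{1..i}. ?x k)"
      unfolding prod.distrib[symmetric] using hx i by (intro prod.cong) auto
    have gb0: "?g * ?b \<noteq> 0" using Bnz1 Bnz2 i by (auto simp: prod_zero_iff)
    have PA: "poly_mat ?n (ls_p ?a ?x i) A = W * ?P * V"
      by (subst AB, rule poly_mat_conj[OF W V VW WV B])
    have "poly_mat ?n (ls_p ?a ?x i) A * Es 0 * poly_mat ?n (ls_p ?a ?x i) A
        = W * (?P * munit ?n 0 0 * ?P) * V"
      unfolding PA EsW[of 0, simplified] using P by (simp add: cm)
    also have "\<dots> = W * ((?g * ?b) \<cdot>\<^sub>m munit ?n i i) * V" unfolding PUP ..
    finally have e: "(1 / (\<Prod>k\<in>{1..i}. ?x k)) \<cdot>\<^sub>m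
        (poly_mat ?n (ls_p ?a ?x i) A * Es 0 * poly_mat ?n (ls_p ?a ?x i) A)
       = W * ((1 / (?g * ?b)) \<cdot>\<^sub>m ((?g * ?b) \<cdot>\<^sub>m munit ?n i i)) * V"
      unfolding gb[symmetric] by (simp add: conj_smult[OF W V VW WV])
    have "(1 / (?g * ?b)) \<cdot>\<^sub>m ((?g * ?b) \<cdot>\<^sub>m munit ?n i i) = munit ?n i i"
      using gb0 by (auto intro!: eq_matI simp: munit_def)
    then show ?thesis unfolding e EsW[OF i] by simp
  qed
  show ?thesis using xnz main by blast
qed

end
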